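(* Let $g:\mathbb{C}\to\mathbb{C}$ (with $\mathbb{C}\cong\mathbb{R}^2$) be a homeomorphism topologically conjugate to the reverse homothety $z\mapsto\bar z/2$. Then $g$ satisfies the topological shadowing property.
   Context: Let $(X,d)$ be a metric space and $f:X\to X$ a homeomorphism; $\mathcal{C}^+=\{\epsilon:X\to\mathbb{R}^+ : \epsilon \text{ continuous}\}$. For $\delta\in\mathcal{C}^+$, a sequence $\{x_n\}_{n\in\mathbb{Z}}\subset X$ is a $\delta$-pseudo-orbit of $f$ if $d(f(x_n),x_{n+1})<\delta(f(x_n))$ for every $n\in\mathbb{Z}$. For $\epsilon\in\mathcal{C}^+$, the sequence $\{x_n\}$ is $\epsilon$-shadowed by an orbit if there is $y\in X$ with $d(f^n(y),x_n)<\epsilon(x_n)$ for every $n\in\mathbb{Z}$. The homeomorphism $f$ satisfies the topological shadowing property if for every $\epsilon\in\mathcal{C}^+$ there exists $\delta\in\mathcal{C}^+$ such that every $\delta$-pseudo-orbit is $\epsilon$-shadowed by an orbit. $\mathbb{C}$ carries the Euclidean metric. *)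

theory Defs
  imports "HOL-Analysis.Analysis"
begin

definition pos_cont :: "('a::metric_space \<Rightarrow> real) set" where
  "pos_cont = {e. continuous_on UNIV e \<and> (\<forall>x. e x > 0)}"

definition ipow :: "('a \<Rightarrow> 'a) \<Rightarrow> int \<Rightarrow> 'a \<Rightarrow> 'a" where
  "ipow f n = (if n \<ge> 0 then f ^^ nat n else inv f ^^ nat (- n))"

definition pseudo_orbit :: "('a::metric_space \<Rightarrow> 'a) \<Rightarrow> ('a \<Rightarrow> real) \<Rightarrow> (int \<Rightarrow> 'a) \<Rightarrow> bool" where
  "pseudo_orbit f d xs \<longleftrightarrow> (\<forall>n. dist (f (xs n)) (xs (n + 1)) < d (f (xs n)))"

definition shadowed :: "('a::metric_space \<Rightarrow> 'a) \<Rightarrow> ('a \<Rightarrow> real) \<Rightarrow> (int \<Rightarrow> 'a) \<Rightarrow> bool" where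
  "shadowed f e xs \<longleftrightarrow> (\<exists>y. \<forall>n. dist (ipow f n y) (xs n) < e (xs n))"

definition topological_shadowing :: "('a::metric_space \<Rightarrow> 'a) \<Rightarrow> bool" where
  "topological_shadowing f \<longleftrightarrow>
     (\<forall>e\<in>pos_cont. \<exists>d\<in>pos_cont. \<forall>xs. pseudo_orbit f d xs \<longrightarrow> shadowed f e xs)"

end

theory Submission imports Defs begin

lemma lemG:
  fixes b :: "complex \<Rightarrow> real"
  assumes lb: "\<And>x. \<exists>c>0. \<forall>y. dist x y < 1 \<longrightarrow> c \<le> b y"
  shows "\<exists>\<delta>\<in>pos_cont. \<forall>x. \<delta> x \<le> b x"
proof -
  define G where "G = range (\<lambda>y. (y, b y))"
  define \<delta> where "\<delta> x = infdist (x, 0::real) G" for x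
  have cont: "continuous_on UNIV \<delta>" unfolding \<delta>_def by (intro continuous_intros)
  have bpos: "b x > 0" for x using lb[of x] by (metis dist_self zero_less_one order_less_le_trans)
  have le: "\<delta> x \<le> b x" for x
  proof -
    have "\<delta> x \<le> dist (x, 0::real) (x, b x)" unfolding \<delta>_def by (rule infdist_le) (auto simp: G_def)
    also have "\<dots> = b x" using bpos[of x] by (simp add: dist_Pair_Pair dist_real_def)
    finally show ?thesis .
  qed
  have pos: "\<delta> x > 0" for x
  proof -
    obtain c where c: "c > 0" "\<forall>y. dist x y < 1 \<longrightarrow> c \<le> b y" using lb by blast
    have key: "min c 1 \<le> dist (x, 0::real) (y, b y)" for y
      proof (cases "dist x y < 1")
        case True
        have "c \<le> b y" using c True by blast
        also have "\<dots> = dist (snd (x, 0::real)) (snd (y, b y))" using bpos[of y] by (simp add: dist_real_def)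
        also have "\<dots> \<le> dist (x, 0::real) (y, b y)" by (rule dist_snd_le)
        finally show ?thesis by simp
      next
        case False
        have "dist x y = dist (fst (x, 0::real)) (fst (y, b y))" by simp
        also have "\<dots> \<le> dist (x, 0::real) (y, b y)" by (rule dist_fst_le)
        finally show ?thesis using False by simp
      qed
    have "min c 1 \<le> \<delta> x" unfolding \<delta>_def infdist_def G_def
      using key by (auto intro!: cINF_greatest)
    then show ?thesis using c by linarith
  qed
  show ?thesis using cont pos le unfolding pos_cont_def by (intro bexI[of _ \<delta>]) auto
qed

lemma lemL:
  fixes \<phi> :: "complex \<Rightarrow> complex"
  assumes c\<phi>: "continuous_on UNIV \<phi>" and \<eta>: "\<eta> \<in> pos_cont"
  shows "\<exists>\<delta>\<in>pos_cont. \<forall>x x'. dist x x' < \<delta> x \<longrightarrow> dist (\<phi> x) (\<phi> x') < \<eta> (\<phi> x)"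
proof -
  have c\<eta>: "continuous_on UNIV \<eta>" and \<eta>pos: "\<And>y. \<eta> y > 0" using \<eta> by (auto simp: pos_cont_def)
  have ex: "\<exists>r>0. \<forall>(x::complex) x'. norm x \<le> real k \<longrightarrow> dist x x' < r \<longrightarrow> dist (\<phi> x) (\<phi> x') < \<eta> (\<phi> x)" for k :: nat
  proof -
    have cc: "continuous_on (cball 0 (real k)) (\<eta> \<circ> \<phi>)"
      using continuous_on_compose[OF c\<phi>] c\<eta> continuous_on_subset by blast
    obtain u where u: "\<forall>y\<in>cball 0 (real k). (\<eta>\<circ>\<phi>) u \<le> (\<eta>\<circ>\<phi>) y"
      using continuous_attains_inf[OF compact_cball _ cc] by fastforce
    have "uniformly_continuous_on (cball 0 (real k + 1)) \<phi>"
      by (rule compact_uniformly_continuous) (auto intro: continuous_on_subset[OF c\<phi>])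
    then obtain d where d: "d > 0" "\<forall>x\<in>cball 0 (real k + 1). \<forall>x'\<in>cball 0 (real k + 1). dist x' x < d \<longrightarrow> dist (\<phi> x') (\<phi> x) < \<eta> (\<phi> u)"
      unfolding uniformly_continuous_on_def using \<eta>pos[of "\<phi> u"] by blast
    show ?thesis
    proof (intro exI[of _ "min d 1"] conjI allI impI)
      fix x x' :: complex assume x: "norm x \<le> real k" and xx: "dist x x' < min d 1"
      have "norm x' \<le> norm x + dist x x'"
        using norm_triangle_ineq2[of x' x] by (simp add: dist_norm norm_minus_commute)
      then have x': "x' \<in> cball 0 (real k + 1)" using x xx by (simp add: dist_norm)
      have "dist (\<phi> x) (\<phi> x') < \<eta> (\<phi> u)" using d(2) x' x xx by (simp add: dist_commute)
      also have "\<dots> \<le> \<eta> (\<phi> x)" using u x by simp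
      finally show "dist (\<phi> x) (\<phi> x') < \<eta> (\<phi> x)" .
    qed (use d in auto)
  qed
  then obtain r where r: "\<forall>k. r k > 0 \<and> (\<forall>(x::complex) x'. norm x \<le> real k \<longrightarrow> dist x x' < r k \<longrightarrow> dist (\<phi> x) (\<phi> x') < \<eta> (\<phi> x))"
    by metis
  define R where "R k = Min (r ` {..k})" for k
  have Rpos: "R k > 0" for k unfolding R_def using r by (subst Min_gr_iff) auto
  have Rle: "R k \<le> r k" for k unfolding R_def by (rule Min_le) auto
  have Ranti: "R k' \<le> R k" if "k \<le> k'" for k k'
  proof -
    have "R k \<in> r ` {..k}" unfolding R_def by (rule Min_in) auto
    then obtain j where j: "j \<le> k" "R k = r j" by auto
    have "R k' \<le> r j" unfolding R_def using j that by (intro Min_le) auto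
    then show ?thesis using j by simp
  qed
  define b where "b (x::complex) = R (nat \<lceil>norm x\<rceil>)" for x
  have lb: "\<exists>c>0. \<forall>y. dist x y < 1 \<longrightarrow> c \<le> b y" for x
  proof (intro exI[of _ "R (nat \<lceil>norm x + 1\<rceil>)"] conjI allI impI)
    fix y assume "dist x y < 1"
    then have "norm y \<le> norm x + 1" using norm_triangle_ineq2[of y x] by (simp add: dist_norm norm_minus_commute)
    then have "nat \<lceil>norm y\<rceil> \<le> nat \<lceil>norm x + 1\<rceil>" by (intro nat_mono ceiling_mono)
    then show "R (nat \<lceil>norm x + 1\<rceil>) \<le> b y" unfolding b_def by (rule Ranti)
  qed (rule Rpos)
  obtain \<delta> where \<delta>: "\<delta> \<in> pos_cont" "\<forall>x. \<delta> x \<le> b x" using lemG[OF lb] by blast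
  show ?thesis
  proof (intro bexI[OF _ \<delta>(1)] allI impI)
    fix x x' assume "dist x x' < \<delta> x"
    then have "dist x x' < r (nat \<lceil>norm x\<rceil>)" using \<delta>(2) Rle[of "nat \<lceil>norm x\<rceil>"] unfolding b_def
      by (meson less_le_trans order_trans)
    moreover have "norm x \<le> real (nat \<lceil>norm x\<rceil>)" by linarith
    ultimately show "dist (\<phi> x) (\<phi> x') < \<eta> (\<phi> x)" using r by blast
  qed
qed


definition fh :: "complex \<Rightarrow> complex" where "fh z = cnj z / 2"

lemma fh_norm: "norm (fh z) = norm z / 2" by (simp add: fh_def norm_divide)
lemma fh_diff: "fh (a - b) = fh a - fh b" by (simp add: fh_def diff_divide_distrib)
lemma fh_inj: "inj fh" unfolding inj_def fh_def by auto
lemma fh_surj: "surj fh" unfolding surj_def fh_def by (metis complex_cnj_cnj complex_cnj_mult complex_cnj_numeral nonzero_mult_div_cancel_left zero_neq_numeral)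
lemma fh_pow_norm: "norm ((fh ^^ j) u) = norm u / 2 ^ j"
  by (induction j) (auto simp: fh_norm)
lemma fh_sums: "summable a \<Longrightarrow> (\<lambda>j. fh (a j)) sums fh (suminf a)"
  unfolding fh_def by (intro sums_divide) (simp add: sums_cnj summable_sums)

lemma lemF:
  assumes \<epsilon>: "\<epsilon> \<in> pos_cont"
  shows "\<exists>\<delta>\<in>pos_cont. \<forall>ys. pseudo_orbit fh \<delta> ys \<longrightarrow> (\<exists>z. \<forall>n. dist (ipow fh n z) (ys n) < \<epsilon> (ys n))"
proof -
  have c\<epsilon>: "continuous_on UNIV \<epsilon>" and \<epsilon>pos: "\<And>y. \<epsilon> y > 0" using \<epsilon> by (auto simp: pos_cont_def)
  define m where "m R = Inf (\<epsilon> ` cball (0::complex) R)" for R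
  have mu: "\<exists>u\<in>cball 0 R. m R = \<epsilon> u \<and> (\<forall>y\<in>cball 0 R. m R \<le> \<epsilon> y)" if "0 \<le> R" for R
  proof -
    have "\<exists>u\<in>cball 0 R. \<forall>y\<in>cball 0 R. \<epsilon> u \<le> \<epsilon> y"
      using continuous_attains_inf[OF compact_cball _ continuous_on_subset[OF c\<epsilon>], of 0 R] that by (simp add: not_less)
    then obtain u where u: "u \<in> cball 0 R" "\<forall>y\<in>cball 0 R. \<epsilon> u \<le> \<epsilon> y" by blast
    have "m R = \<epsilon> u" unfolding m_def using u by (intro cInf_eq_minimum) auto
    then show ?thesis using u by auto
  qed
  have mpos: "m R > 0" if "0 \<le> R" for R using mu[OF that] \<epsilon>pos by auto
  have mle: "m R \<le> \<epsilon> y" if "0 \<le> R" "norm y \<le> R" for R y using mu[OF that(1)] that(2) by auto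
  have manti: "m R' \<le> m R" if R0: "0 \<le> R" and RR: "R \<le> R'" for R R'
  proof -
    obtain u where u: "u \<in> cball 0 R" "m R = \<epsilon> u" using mu[OF R0] by auto
    have "m R' \<le> \<epsilon> u" using u(1) R0 RR by (intro mle) auto
    then show ?thesis using u by simp
  qed
  define b where "b (w::complex) = min 1 (m (norm w + 2)) / 4" for w
  have lb: "\<exists>c>0. \<forall>y. dist x y < 1 \<longrightarrow> c \<le> b y" for x
  proof (intro exI[of _ "min 1 (m (norm x + 3)) / 4"] conjI allI impI)
    show "0 < min 1 (m (norm x + 3)) / 4" using mpos[of "norm x + 3"] by simp
    fix y assume "dist x y < 1"
    then have "norm y \<le> norm x + 1" using norm_triangle_ineq2[of y x] by (simp add: dist_norm norm_minus_commute)
    then have "m (norm x + 3) \<le> m (norm y + 2)" by (intro manti) auto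
    then show "min 1 (m (norm x + 3)) / 4 \<le> b y" unfolding b_def by linarith
  qed
  obtain \<delta> where \<delta>: "\<delta> \<in> pos_cont" "\<forall>x. \<delta> x \<le> b x" using lemG[OF lb] by blast
  show ?thesis
  proof (intro bexI[OF _ \<delta>(1)] allI impI)
    fix ys assume po: "pseudo_orbit fh \<delta> ys"
    define e where "e n = ys (n + 1) - fh (ys n)" for n
    have ys_e: "ys (n + 1) = fh (ys n) + e n" for n unfolding e_def by simp
    have e_bd: "norm (e n) < \<delta> (fh (ys n))" for n
      using po unfolding pseudo_orbit_def e_def by (simp add: dist_norm norm_minus_commute)
    have e_b: "norm (e n) < b (fh (ys n))" for n using e_bd[of n] \<delta>(2) by (meson less_le_trans)
    have e1: "norm (e n) < 1" for n using e_b[of n] unfolding b_def by linarith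
    have growth: "norm (ys (k + 1 + int i)) \<le> norm (fh (ys k)) + 2" for k i
    proof (induction i)
      case 0
      have "norm (ys (k + 1)) \<le> norm (fh (ys k)) + norm (e k)" unfolding ys_e by (rule norm_triangle_ineq)
      then show ?case using e1[of k] by simp
    next
      case (Suc i)
      have eq: "k + 1 + int (Suc i) = (k + 1 + int i) + 1" by simp
      have "norm (ys (k + 1 + int (Suc i))) \<le> norm (fh (ys (k + 1 + int i))) + norm (e (k + 1 + int i))"
        unfolding eq ys_e by (rule norm_triangle_ineq)
      also have "\<dots> \<le> norm (ys (k + 1 + int i)) / 2 + 1" using e1[of "k + 1 + int i"] by (simp add: fh_norm)
      also have "\<dots> \<le> norm (fh (ys k)) + 2" using Suc norm_ge_zero[of "fh (ys k)"] by linarith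
      finally show ?case .
    qed
    have e_eps: "norm (e (n - 1 - int j)) < \<epsilon> (ys n) / 4" for n j
    proof -
      define w where "w = fh (ys (n - 1 - int j))"
      have g: "norm (ys n) \<le> norm w + 2" using growth[of "n - 1 - int j" j] unfolding w_def by simp
      have "norm (e (n - 1 - int j)) < b w" using e_b unfolding w_def by blast
      also have "\<dots> \<le> m (norm w + 2) / 4" unfolding b_def by simp
      also have "\<dots> \<le> \<epsilon> (ys n) / 4" using mle[of "norm w + 2" "ys n"] g by simp
      finally show ?thesis .
    qed
    define a where "a n j = (fh ^^ j) (e (n - 1 - int j))" for n j
    have a_norm: "norm (a n j) = norm (e (n - 1 - int j)) / 2 ^ j" for n j
      unfolding a_def by (rule fh_pow_norm)
    have sum_geo: "summable (\<lambda>j. c * (1/2::real) ^ j)" for c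
      by (intro summable_mult summable_geometric) simp
    have na_le: "norm (a n j) \<le> \<epsilon> (ys n) / 4 * (1/2) ^ j" for n j
    proof -
      have "norm (e (n - 1 - int j)) / 2 ^ j \<le> (\<epsilon> (ys n) / 4) / 2 ^ j"
        by (rule divide_right_mono) (use e_eps[of n j] in auto)
      then show ?thesis unfolding a_norm by (simp add: power_one_over)
    qed
    have sna: "summable (\<lambda>j. norm (a n j))" for n
      by (rule summable_comparison_test[OF _ sum_geo[of "\<epsilon> (ys n) / 4"]]) (use na_le in auto)
    have sa: "summable (a n)" for n using sna by (rule summable_norm_cancel)
    define S where "S n = suminf (a n)" for n
    define z where "z n = ys n - S n" for n
    have S_step: "S (n + 1) = e n + fh (S n)" for n
    proof -
      have a0: "a (n + 1) 0 = e n" unfolding a_def by simp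
      have aS: "a (n + 1) (Suc j) = fh (a n j)" for j
      proof -
        have "n + 1 - 1 - int (Suc j) = n - 1 - int j" by simp
        then show ?thesis unfolding a_def by (simp only: funpow.simps o_apply)
      qed
      have "S (n + 1) = a (n + 1) 0 + (\<Sum>j. a (n + 1) (Suc j))"
        unfolding S_def using suminf_split_head[OF sa[of "n+1"]] by simp
      also have "(\<Sum>j. a (n + 1) (Suc j)) = fh (S n)"
        unfolding aS S_def using fh_sums[OF sa[of n]] by (rule sums_unique[symmetric])
      finally show ?thesis using a0 by simp
    qed
    have z_step: "z (n + 1) = fh (z n)" for n
      unfolding z_def S_step ys_e fh_diff by simp
    have orb_pos: "(fh ^^ k) (z 0) = z (int k)" for k
      by (induction k) (auto simp: z_step[symmetric] add.commute)
    have orb_neg: "(inv fh ^^ k) (z 0) = z (- int k)" for k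
    proof (induction k)
      case (Suc k)
      have "z (- int k) = fh (z (- int (Suc k)))" using z_step[of "- int (Suc k)"] by simp
      then show ?case using Suc by (simp add: inv_f_f[OF fh_inj])
    qed simp
    have orb: "ipow fh n (z 0) = z n" for n
      unfolding ipow_def using orb_pos[of "nat n"] orb_neg[of "nat (- n)"] by auto
    show "\<exists>z. \<forall>n. dist (ipow fh n z) (ys n) < \<epsilon> (ys n)"
    proof (intro exI[of _ "z 0"] allI)
      fix n
      have "dist (ipow fh n (z 0)) (ys n) = norm (S n)" unfolding orb by (simp add: z_def dist_norm)
      also have "\<dots> \<le> (\<Sum>j. norm (a n j))" unfolding S_def by (rule summable_norm[OF sna])
      also have "\<dots> \<le> (\<Sum>j. \<epsilon> (ys n) / 4 * (1/2) ^ j)"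
        by (rule suminf_le[OF na_le sna sum_geo])
      also have "\<dots> = \<epsilon> (ys n) / 2"
        by (subst suminf_mult[OF summable_geometric]) (simp_all add: suminf_geometric)
      also have "\<dots> < \<epsilon> (ys n)" using \<epsilon>pos[of "ys n"] by simp
      finally show "dist (ipow fh n (z 0)) (ys n) < \<epsilon> (ys n)" .
    qed
  qed
qed


theorem mainTheorem8:
  fixes g g' :: "complex \<Rightarrow> complex"
  assumes "homeomorphism UNIV UNIV g g'"
    and "\<exists>h h'. homeomorphism UNIV UNIV h h' \<and> (\<forall>z. h (g z) = cnj (h z) / 2)"
  shows "topological_shadowing g"
proof -
  obtain h h' where hh: "homeomorphism UNIV UNIV h h'" and hc: "\<forall>z. h (g z) = cnj (h z) / 2"
    using assms(2) by blast
  have hh1: "h' (h x) = x" and hh2: "h (h' y) = y" and ch: "continuous_on UNIV h"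
    and ch': "continuous_on UNIV h'" for x y
    using hh unfolding homeomorphism_def by auto
  have ginj: "inj g" using assms(1) unfolding homeomorphism_def inj_def by (metis UNIV_I)
  have gform: "g x = h' (fh (h x))" for x using hc hh1 unfolding fh_def by metis
  have C_pos: "(g ^^ k) (h' z) = h' ((fh ^^ k) z)" for k z
    by (induction k) (auto simp: gform hh2)
  have ginv: "inv g (h' u) = h' (inv fh u)" for u
  proof -
    have "g (h' (inv fh u)) = h' u" unfolding gform hh2 surj_f_inv_f[OF fh_surj] ..
    then show ?thesis using inv_f_f[OF ginj, of "h' (inv fh u)"] by simp
  qed
  have C_neg: "(inv g ^^ k) (h' z) = h' ((inv fh ^^ k) z)" for k z
    by (induction k) (auto simp: ginv)
  have C: "ipow g n (h' z) = h' (ipow fh n z)" for n z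
    unfolding ipow_def using C_pos C_neg by simp
  show ?thesis unfolding topological_shadowing_def
  proof
    fix \<epsilon> :: "complex \<Rightarrow> real" assume \<epsilon>: "\<epsilon> \<in> pos_cont"
    obtain \<delta>1 where \<delta>1: "\<delta>1 \<in> pos_cont" "\<forall>y y'. dist y y' < \<delta>1 y \<longrightarrow> dist (h' y) (h' y') < \<epsilon> (h' y)"
      using lemL[OF ch' \<epsilon>] by blast
    obtain \<delta>2 where \<delta>2: "\<delta>2 \<in> pos_cont" "\<forall>ys. pseudo_orbit fh \<delta>2 ys \<longrightarrow> (\<exists>z. \<forall>n. dist (ipow fh n z) (ys n) < \<delta>1 (ys n))"
      using lemF[OF \<delta>1(1)] by blast
    obtain \<delta> where \<delta>: "\<delta> \<in> pos_cont" "\<forall>x x'. dist x x' < \<delta> x \<longrightarrow> dist (h x) (h x') < \<delta>2 (h x)"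
      using lemL[OF ch \<delta>2(1)] by blast
    show "\<exists>\<delta>\<in>pos_cont. \<forall>xs. pseudo_orbit g \<delta> xs \<longrightarrow> shadowed g \<epsilon> xs"
    proof (intro bexI[OF _ \<delta>(1)] allI impI)
      fix xs assume po: "pseudo_orbit g \<delta> xs"
      define ys where "ys n = h (xs n)" for n
      have hg: "h (g x) = fh (h x)" for x using hc unfolding fh_def by simp
      have "pseudo_orbit fh \<delta>2 ys" unfolding pseudo_orbit_def
      proof
        fix n
        have "dist (g (xs n)) (xs (n + 1)) < \<delta> (g (xs n))" using po unfolding pseudo_orbit_def by blast
        then have "dist (h (g (xs n))) (h (xs (n + 1))) < \<delta>2 (h (g (xs n)))" using \<delta>(2) by blast
        then show "dist (fh (ys n)) (ys (n + 1)) < \<delta>2 (fh (ys n))" unfolding ys_def hg .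
      qed
      then obtain z where z: "\<forall>n. dist (ipow fh n z) (ys n) < \<delta>1 (ys n)" using \<delta>2(2) by blast
      show "shadowed g \<epsilon> xs" unfolding shadowed_def
      proof (intro exI[of _ "h' z"] allI)
        fix n
        have "dist (ys n) (ipow fh n z) < \<delta>1 (ys n)" using z by (simp add: dist_commute)
        then have "dist (h' (ys n)) (h' (ipow fh n z)) < \<epsilon> (h' (ys n))" using \<delta>1(2) by blast
        then show "dist (ipow g n (h' z)) (xs n) < \<epsilon> (xs n)"
          unfolding C ys_def hh1 by (simp add: dist_commute)
      qed
    qed
  qed
qed

end
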